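(* Let $L\ge 2$, let $S=(d,N_1,\dots,N_{L-1},1)$ be a neural network architecture, and let $\Omega\subset\mathbb{R}^d$ be compact. Let $\varrho:\mathbb{R}\to\mathbb{R}$ be continuous but not a polynomial, and such that $\varrho$ is differentiable at some $x_0\in\mathbb{R}$ with $\varrho'(x_0)\neq 0$. Assume that $\mathcal{RNN}_\varrho^\Omega(S)$ is not dense in $C(\Omega)$ (with the supremum norm). Then there does not exist any $\varepsilon>0$ such that the closure $\overline{\mathcal{RNN}_\varrho^\Omega(S)}$ (taken in $C(\Omega)$) is $\varepsilon$-convex in $(C(\Omega),\|\cdot\|_{\sup})$.
   Context: A neural network with architecture $S=(N_0,N_1,\dots,N_L)$ (with $N_0=d$) is a family $\Phi=((A_\ell,b_\ell))_{\ell=1}^L$ with $A_\ell\in\mathbb{R}^{N_\ell\times N_{\ell-1}}$, $b_\ell\in\mathbb{R}^{N_\ell}$; $\mathcal{NN}(S)$ denotes the set of these. For $\varrho:\mathbb{R}\to\mathbb{R}$ and $\Omega\subset\mathbb{R}^d$, the realization $\mathrm{R}_\varrho^\Omega(\Phi):\Omega\to\mathbb{R}^{N_L}$ is $x\mapsto x_L$ with $x_0=x$, $x_\ell=\varrho(A_\ell x_{\ell-1}+b_\ell)$ for $1\le\ell\le L-1$ ($\varrho$ componentwise), $x_L=A_Lx_{L-1}+b_L$; and $\mathcal{RNN}_\varrho^\Omega(S)=\{\mathrm{R}_\varrho^\Omega(\Phi):\Phi\in\mathcal{NN}(S)\}$. For a subset $A$ of a normed space $\mathcal{Y}$, $\mathrm{co}(A)$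 is the convex hull, and $A$ is called $\varepsilon$-convex if $\mathrm{co}(A)\subset A+B_\varepsilon(0)$, where $B_\varepsilon(0)$ is the open $\varepsilon$-ball around $0$ in $\mathcal{Y}$. *)

theory Defs
  imports "HOL-Analysis.Analysis" "HOL-Computational_Algebra.Polynomial"
begin

text \<open>Layer parameters (A, b): a matrix indexed by row/column numbers and a bias vector.
  Vectors of width m are represented as functions nat => real, only indices < m being relevant.\<close>
type_synonym layer = "(nat \<Rightarrow> nat \<Rightarrow> real) \<times> (nat \<Rightarrow> real)"

definition affine :: "nat \<Rightarrow> nat \<Rightarrow> layer \<Rightarrow> (nat \<Rightarrow> real) \<Rightarrow> (nat \<Rightarrow> real)" where
  "affine m n Ab y = (\<lambda>i. if i < m then (\<Sum>j<n. fst Ab i j * y j) + snd Ab i else 0)"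

definition act :: "(real \<Rightarrow> real) \<Rightarrow> nat \<Rightarrow> (nat \<Rightarrow> real) \<Rightarrow> (nat \<Rightarrow> real)" where
  "act \<rho> n y = (\<lambda>i. if i < n then \<rho> (y i) else 0)"

text \<open>net_tail rho n ms Phi y: y is the pre-activation of a layer of width n; the remaining
  layers have output widths ms and parameters Phi. The last layer is affine (no activation).\<close>
fun net_tail :: "(real \<Rightarrow> real) \<Rightarrow> nat \<Rightarrow> nat list \<Rightarrow> layer list \<Rightarrow> (nat \<Rightarrow> real) \<Rightarrow> (nat \<Rightarrow> real)" where
  "net_tail \<rho> n [] [] y = y"
| "net_tail \<rho> n (m # ms) (Ab # \<Phi>) y = net_tail \<rho> m ms \<Phi> (affine m n Ab (act \<rho> n y))"
| "net_tail \<rho> n _ _ y = y"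

text \<open>Realizations of networks with architecture (d, N_1, ..., N_{L-1}, 1), where
  Ns = [N_1, ..., N_{L-1}] and d = CARD('d). The first layer matrix A_1 (N_1 x d) is given by
  its rows W i :: real^'d, with bias c. Output R^1 is identified with R.\<close>
definition RNN :: "(real \<Rightarrow> real) \<Rightarrow> nat list \<Rightarrow> (real^'d \<Rightarrow> real) set" where
  "RNN \<rho> Ns = {(\<lambda>x. net_tail \<rho> (hd Ns) (tl Ns @ [1]) \<Phi>
                     (\<lambda>i. if i < hd Ns then W i \<bullet> x + c i else 0) 0)
               | W c \<Phi>. length \<Phi> = length Ns}"

definition sup_dist :: "'a set \<Rightarrow> ('a \<Rightarrow> real) \<Rightarrow> ('a \<Rightarrow> real) \<Rightarrow> real" where
  "sup_dist \<Omega> f g = (if \<Omega> = {} then 0 else (SUP x\<in>\<Omega>. \<bar>f x - g x\<bar>))"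

definition C_closure :: "'a::topological_space set \<Rightarrow> ('a \<Rightarrow> real) set \<Rightarrow> ('a \<Rightarrow> real) set" where
  "C_closure \<Omega> A = {g. continuous_on \<Omega> g \<and> (\<forall>\<delta>>0. \<exists>f\<in>A. sup_dist \<Omega> f g < \<delta>)}"

definition dense_in_C :: "'a::topological_space set \<Rightarrow> ('a \<Rightarrow> real) set \<Rightarrow> bool" where
  "dense_in_C \<Omega> A \<longleftrightarrow> (\<forall>g. continuous_on \<Omega> g \<longrightarrow> g \<in> C_closure \<Omega> A)"

definition fun_convex_hull :: "('a \<Rightarrow> real) set \<Rightarrow> ('a \<Rightarrow> real) set" where
  "fun_convex_hull A = {h. \<exists>(k::nat) (c::nat \<Rightarrow> real) (f :: nat \<Rightarrow> 'a \<Rightarrow> real). (\<forall>i<k. 0 \<le> c i \<and> f i \<in> A) \<and> (\<Sum>i<k. c i) = 1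
                                  \<and> h = (\<lambda>x. \<Sum>i<k. c i * f i x)}"

text \<open>A is eps-convex in C(\<Omega>): co(A) is contained in A + B_eps(0) (open ball, sup norm).\<close>
definition eps_convex :: "'a set \<Rightarrow> real \<Rightarrow> ('a \<Rightarrow> real) set \<Rightarrow> bool" where
  "eps_convex \<Omega> \<epsilon> A \<longleftrightarrow> (\<forall>h\<in>fun_convex_hull A. \<exists>g\<in>A. sup_dist \<Omega> h g < \<epsilon>)"

end

theory Submission
  imports Defs
begin
lemma exists_anti:
  fixes f :: "real \<Rightarrow> real"
  assumes "continuous_on UNIV f"
  shows "\<exists>F. \<forall>x. (F has_real_derivative f x) (at x)"
proof -
  have "\<exists>F. \<forall>x :: real. (-\<infinity>::ereal) < x \<longrightarrow> x < (\<infinity>::ereal) \<longrightarrow> (F has_vector_derivative f x) (at x)"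
    by (rule einterval_antiderivative) (use assms in \<open>auto simp: continuous_on_eq_continuous_at\<close>)
  then show ?thesis by (auto simp: has_real_derivative_iff_has_vector_derivative)
qed

definition anti :: "(real \<Rightarrow> real) \<Rightarrow> real \<Rightarrow> real" where
  "anti f = (SOME F. \<forall>x. (F has_real_derivative f x) (at x))"

lemma anti_deriv:
  assumes "continuous_on UNIV f"
  shows "(anti f has_real_derivative f x) (at x)"
  using someI_ex[OF exists_anti[OF assms]] unfolding anti_def by blast

lemma MVB:
  fixes F P :: "real \<Rightarrow> real"
  assumes "a \<le> b" "\<And>z. (P has_real_derivative F z) (at z)"
    "\<And>z. a \<le> z \<Longrightarrow> z \<le> b \<Longrightarrow> \<bar>F z - c\<bar> \<le> \<eta>"
  shows "\<bar>P b - P a - (b - a) * c\<bar> \<le> (b - a) * \<eta>"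
proof (cases "a = b")
  case True then show ?thesis by simp
next
  case False
  then have "a < b" using assms by simp
  from MVT2[OF this assms(2)] obtain z where z: "a < z" "z < b" "P b - P a = (b - a) * F z" by blast
  have "P b - P a - (b - a) * c = (b - a) * (F z - c)" using z by (simp add: algebra_simps)
  then have "\<bar>P b - P a - (b - a) * c\<bar> = (b - a) * \<bar>F z - c\<bar>"
    using \<open>a < b\<close> by (simp add: abs_mult)
  also have "\<dots> \<le> (b - a) * \<eta>" using assms(3)[of z] z \<open>a < b\<close> by (intro mult_left_mono) auto
  finally show ?thesis .
qed

lemma MVB2:
  fixes F P :: "real \<Rightarrow> real"
  assumes "\<And>z. (P has_real_derivative F z) (at z)"
    "\<And>z. \<bar>z - a\<bar> \<le> \<bar>b - a\<bar> \<Longrightarrow> \<bar>F z - F a\<bar> \<le> \<eta>"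
  shows "\<bar>P b - P a - (b - a) * F a\<bar> \<le> \<bar>b - a\<bar> * \<eta>"
proof (cases "a \<le> b")
  case True
  have "\<bar>P b - P a - (b - a) * F a\<bar> \<le> (b - a) * \<eta>"
    by (rule MVB[OF True assms(1)]) (use assms(2) True in auto)
  then show ?thesis using True by simp
next
  case False
  have "\<bar>P a - P b - (a - b) * F a\<bar> \<le> (a - b) * \<eta>"
    by (rule MVB[of b a P F]) (use assms False in auto)
  moreover have "\<bar>P a - P b - (a - b) * F a\<bar> = \<bar>P b - P a - (b - a) * F a\<bar>"
    by (simp add: algebra_simps abs_minus_commute)
  ultimately show ?thesis using False by simp
qed

definition avg :: "real \<Rightarrow> (real \<Rightarrow> real) \<Rightarrow> real \<Rightarrow> real" where
  "avg h f t = (anti f (t + h) - anti f t) / h"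

definition dif :: "real \<Rightarrow> (real \<Rightarrow> real) \<Rightarrow> real \<Rightarrow> real" where
  "dif h f t = (f (t + h) - f t) / h"

lemma avg_deriv:
  assumes "continuous_on UNIV f"
  shows "(avg h f has_real_derivative dif h f t) (at t)"
proof -
  have a: "((\<lambda>t. anti f (t + h)) has_real_derivative f (t + h)) (at t)"
    using anti_deriv[OF assms, of "t+h"] by (simp add: DERIV_shift)
  have "((\<lambda>t. anti f (t + h) - anti f t) has_real_derivative f (t + h) - f t) (at t)"
    by (rule DERIV_diff[OF a anti_deriv[OF assms]])
  from DERIV_cdivide[OF this, of h] show ?thesis unfolding avg_def[abs_def] dif_def .
qed

lemma avg_cont:
  assumes "continuous_on UNIV f"
  shows "continuous_on UNIV (avg h f)"
  by (rule continuous_at_imp_continuous_on) (use DERIV_isCont[OF avg_deriv[OF assms]] in blast)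

lemma dif_cont:
  assumes "continuous_on UNIV f"
  shows "continuous_on UNIV (dif h f)"
proof -
  have "dif h f = (\<lambda>t. (1/h) * (f (t + h) - f t))" by (auto simp: dif_def[abs_def])
  moreover have "continuous_on UNIV (\<lambda>t. (1/h) * (f (t + h) - f t))"
    by (intro continuous_intros continuous_on_compose2[OF assms]) auto
  ultimately show ?thesis by simp
qed

lemma dif_deriv:
  assumes "\<And>x. (F has_real_derivative G x) (at x)"
  shows "(dif h F has_real_derivative dif h G t) (at t)"
proof -
  have a: "((\<lambda>t. F (t + h)) has_real_derivative G (t + h)) (at t)"
    using assms[of "t+h"] by (simp add: DERIV_shift)
  have "((\<lambda>t. F (t + h) - F t) has_real_derivative G (t + h) - G t) (at t)"
    by (rule DERIV_diff[OF a assms])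
  from DERIV_cdivide[OF this, of h] show ?thesis unfolding dif_def[abs_def] .
qed

lemma difpow_deriv:
  assumes "\<And>x. (F has_real_derivative G x) (at x)"
  shows "((dif h ^^ k) F has_real_derivative (dif h ^^ k) G t) (at t)"
  using assms
proof (induction k arbitrary: t)
  case 0 then show ?case by simp
next
  case (Suc k)
  show ?case by simp (rule dif_deriv, rule Suc.IH, rule Suc.prems)
qed

lemma difpow_cont:
  assumes "continuous_on UNIV f"
  shows "continuous_on UNIV ((dif h ^^ k) f)"
  by (induction k) (auto intro: dif_cont assms)

lemma avgpow_cont:
  assumes "continuous_on UNIV f"
  shows "continuous_on UNIV ((avg h ^^ k) f)"
  by (induction k) (auto intro: avg_cont assms)

lemma smooth_avg:
  assumes "continuous_on UNIV f"
  shows "\<exists>D. D 0 = (avg h ^^ k) f \<and> (\<forall>m<k. \<forall>t. (D m has_real_derivative D (Suc m) t) (at t))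
    \<and> (\<forall>m\<le>k. continuous_on UNIV (D m)) \<and> D k = (dif h ^^ k) f"
  using assms
proof (induction k arbitrary: f)
  case 0
  then show ?case by (intro exI[of _ "\<lambda>_. f"]) auto
next
  case (Suc k)
  have ca: "continuous_on UNIV (avg h f)" by (rule avg_cont[OF Suc.prems])
  from Suc.IH[OF ca] obtain D where D: "D 0 = (avg h ^^ k) (avg h f)"
    "\<forall>m<k. \<forall>t. (D m has_real_derivative D (Suc m) t) (at t)"
    "\<forall>m\<le>k. continuous_on UNIV (D m)" "D k = (dif h ^^ k) (avg h f)" by blast
  define D' where "D' = D(Suc k := (dif h ^^ Suc k) f)"
  show ?case
  proof (intro exI[of _ D'] conjI allI impI)
    have "(avg h ^^ Suc k) f = (avg h ^^ k) (avg h f)" by (simp only: funpow_Suc_right comp_def)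
    then show "D' 0 = (avg h ^^ Suc k) f" using D(1) by (simp add: D'_def)
    show "D' (Suc k) = (dif h ^^ Suc k) f" by (simp add: D'_def)
    fix m assume "m \<le> Suc k"
    then show "continuous_on UNIV (D' m)"
      using D(3) difpow_cont[OF Suc.prems, where h=h and k="Suc k"] by (auto simp: D'_def le_Suc_eq)
  next
    fix m t assume m: "m < Suc k"
    show "(D' m has_real_derivative D' (Suc m) t) (at t)"
    proof (cases "m < k")
      case True then show ?thesis using D(2) by (auto simp: D'_def)
    next
      case False
      then have "m = k" using m by simp
      have "((dif h ^^ k) (avg h f) has_real_derivative (dif h ^^ k) (dif h f) t) (at t)"
        by (rule difpow_deriv, rule avg_deriv[OF Suc.prems])
      moreover have "(dif h ^^ Suc k) f = (dif h ^^ k) (dif h f)" by (simp only: funpow_Suc_right comp_def)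
      ultimately show ?thesis using \<open>m = k\<close> D(4) by (simp add: D'_def)
    qed
  qed
qed

lemma avgpow_close:
  assumes "continuous_on UNIV f" "h > 0"
    "\<And>s. 0 \<le> s \<Longrightarrow> s \<le> real j * h \<Longrightarrow> \<bar>f (v + s) - c\<bar> \<le> \<epsilon>"
  shows "\<bar>(avg h ^^ j) f v - c\<bar> \<le> \<epsilon>"
  using assms(3)
proof (induction j arbitrary: v)
  case 0 then show ?case using "0.prems"[of 0] by simp
next
  case (Suc j)
  let ?G = "(avg h ^^ j) f"
  have cG: "continuous_on UNIV ?G" by (rule avgpow_cont[OF assms(1)])
  have b: "\<bar>anti ?G (v + h) - anti ?G v - (v + h - v) * c\<bar> \<le> (v + h - v) * \<epsilon>"
  proof (rule MVB)
    fix z assume z: "v \<le> z" "z \<le> v + h"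
    show "\<bar>?G z - c\<bar> \<le> \<epsilon>"
    proof (rule Suc.IH)
      fix s assume s: "0 \<le> s" "s \<le> real j * h"
      have "f (v + (z - v + s)) = f (z + s)" by simp
      moreover have "\<bar>f (v + (z - v + s)) - c\<bar> \<le> \<epsilon>"
        by (rule Suc.prems) (use s z in \<open>auto simp: algebra_simps\<close>)
      ultimately show "\<bar>f (z + s) - c\<bar> \<le> \<epsilon>" by simp
    qed
  qed (use assms(2) anti_deriv[OF cG] in auto)
  then have "\<bar>anti ?G (v + h) - anti ?G v - h * c\<bar> \<le> h * \<epsilon>" by simp
  then have "\<bar>(anti ?G (v + h) - anti ?G v - h * c) / h\<bar> \<le> \<epsilon>"
    using assms(2) by (simp add: abs_div pos_divide_le_eq mult.commute)
  moreover have "(anti ?G (v + h) - anti ?G v - h * c) / h = avg h ?G v - c"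
    using assms(2) by (simp add: avg_def diff_divide_distrib)
  ultimately show ?case by simp
qed

definition lagb :: "nat \<Rightarrow> nat \<Rightarrow> real poly" where
  "lagb k i = smult (1 / (\<Prod>j\<in>{..<k}-{i}. (real i - real j))) (\<Prod>j\<in>{..<k}-{i}. [:- real j, 1:])"

lemma lagb_poly:
  assumes "i < k" "j < k"
  shows "poly (lagb k i) (real j) = (if i = j then 1 else 0)"
proof (cases "i = j")
  case True
  have nz: "(\<Prod>j'\<in>{..<k}-{i}. (real i - real j')) \<noteq> 0" by (auto simp: prod_zero_iff)
  have "poly (lagb k i) (real j) = (\<Prod>j'\<in>{..<k}-{i}. (real i - real j')) / (\<Prod>j'\<in>{..<k}-{i}. (real i - real j'))"
    unfolding lagb_def poly_smult poly_prod using True by simp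
  then show ?thesis using True nz by simp
next
  case False
  then have "j \<in> {..<k}-{i}" using assms by auto
  then have "(\<Prod>j'\<in>{..<k}-{i}. poly [:- real j', 1:] (real j)) = 0"
    by (intro prod_zero) auto
  then show ?thesis using False unfolding lagb_def poly_smult poly_prod by simp
qed

lemma lagb_degree: "i < k \<Longrightarrow> degree (lagb k i) \<le> k - Suc 0"
proof -
  assume i: "i < k"
  have "degree (\<Prod>j\<in>{..<k}-{i}. [:- real j, 1:]) \<le> (\<Sum>j\<in>{..<k}-{i}. degree [:- real j, 1:])"
    using degree_prod_sum_le[of "{..<k}-{i}" "\<lambda>j. [:- real j, 1:]"] by (simp add: o_def)
  also have "\<dots> = card ({..<k}-{i})" by simp
  also have "\<dots> = k - Suc 0" using i by simp
  finally show ?thesis unfolding lagb_def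
    using degree_smult_le order_trans by blast
qed

lemma lagrange_repr:
  assumes "k > 0" "degree q < k"
  shows "poly q x = (\<Sum>i<k. poly q (real i) * poly (lagb k i) x)"
proof -
  define L where "L = (\<Sum>i<k. smult (poly q (real i)) (lagb k i))"
  have dL: "degree L \<le> k - Suc 0"
    unfolding L_def by (rule degree_sum_le) (auto intro: order_trans[OF degree_smult_le] lagb_degree)
  have cA: "card (real ` {..<k}) = k" by (simp add: card_image)
  have ev: "poly L (real j) = poly q (real j)" if j: "j < k" for j
  proof -
    have "poly L (real j) = (\<Sum>i<k. poly q (real i) * poly (lagb k i) (real j))"
      unfolding L_def poly_sum by simp
    also have "\<dots> = (\<Sum>i<k. (if i = j then poly q (real j) else 0))"
      by (rule sum.cong) (use j lagb_poly in auto)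
    also have "\<dots> = poly q (real j)" using j by simp
    finally show ?thesis .
  qed
  have "q = L"
  proof (rule poly_eqI_degree[of "real ` {..<k}"])
    fix y assume "y \<in> real ` {..<k}"
    then obtain j where j: "j < k" "y = real j" by auto
    then show "poly q y = poly L y" using ev by simp
  next
    show "degree q < card (real ` {..<k})" using cA assms by simp
    show "degree L < card (real ` {..<k})" using cA assms dL by linarith
  qed
  then have "poly q x = poly L x" by (rule arg_cong)
  also have "poly L x = (\<Sum>i<k. poly q (real i) * poly (lagb k i) x)" by (simp add: L_def poly_sum)
  finally show ?thesis .
qed

lemma lagrange_limit:
  fixes f :: "real \<Rightarrow> real"
  assumes "k > 0" "\<And>n x. g n x = poly (q n) x" "\<And>n. degree (q n) < k"
    "\<And>x. (\<lambda>n. g n x) \<longlonglongrightarrow> f x"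
  shows "\<exists>p. \<forall>x. f x = poly p x"
proof -
  have "f x = poly (\<Sum>i<k. smult (f (real i)) (lagb k i)) x" for x
  proof -
    have "g n x = (\<Sum>i<k. g n (real i) * poly (lagb k i) x)" for n
      unfolding assms(2) by (rule lagrange_repr[OF assms(1) assms(3)])
    then have "(\<lambda>n. g n x) = (\<lambda>n. \<Sum>i<k. g n (real i) * poly (lagb k i) x)" by (rule ext)
    moreover have "(\<lambda>n. \<Sum>i<k. g n (real i) * poly (lagb k i) x) \<longlonglongrightarrow> (\<Sum>i<k. f (real i) * poly (lagb k i) x)"
      by (intro tendsto_intros assms(4))
    ultimately have "(\<lambda>n. g n x) \<longlonglongrightarrow> (\<Sum>i<k. f (real i) * poly (lagb k i) x)" by simp
    then have "f x = (\<Sum>i<k. f (real i) * poly (lagb k i) x)" using assms(4) LIMSEQ_unique by blast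
    then show ?thesis by (simp add: poly_sum)
  qed
  then show ?thesis by blast
qed

lemma deriv_zero_poly:
  fixes D :: "nat \<Rightarrow> real \<Rightarrow> real"
  assumes "\<forall>m<k. \<forall>t. (D m has_real_derivative D (Suc m) t) (at t)" "\<forall>t. D k t = 0"
  shows "\<exists>q. degree q < k \<and> (\<forall>x. D 0 x = poly q x) \<or> (k = 0 \<and> (\<forall>x. D 0 x = 0))"
proof (cases "k = 0")
  case True then show ?thesis using assms by auto
next
  case False
  define diff where "diff m = (if m \<le> k then D m else (\<lambda>_. 0))" for m
  have dd: "\<forall>m x. (diff m has_real_derivative diff (Suc m) x) (at x)"
  proof (intro allI)
    fix m x
    show "(diff m has_real_derivative diff (Suc m) x) (at x)"
    proof (cases "m < k")
      case True then show ?thesis using assms(1) by (auto simp: diff_def)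
    next
      case False
      then have "diff m = (\<lambda>_. 0)" using assms(2) by (auto simp: diff_def fun_eq_iff)
      moreover have "diff (Suc m) x = 0" using False assms(2) by (auto simp: diff_def)
      ultimately show ?thesis by simp
    qed
  qed
  define q where "q = (\<Sum>m<k. monom (D m 0 / fact m) m)"
  have "D 0 x = poly q x" for x
  proof -
    obtain t where t: "D 0 x = (\<Sum>m<k. (diff m 0 / fact m) * x ^ m) + (diff k t / fact k) * x ^ k"
      using Maclaurin_all_le[of diff "D 0", OF _ dd, of x k] by (auto simp: diff_def)
    then show ?thesis using assms(2)
      by (simp add: q_def poly_sum poly_monom diff_def)
  qed
  moreover have "degree q < k"
  proof -
    have "degree q \<le> k - 1" unfolding q_def
      by (rule degree_sum_le) (auto intro: order_trans[OF degree_monom_le])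
    then show ?thesis using False by simp
  qed
  ultimately show ?thesis by blast
qed

locale ucls =
  fixes U :: "(real \<Rightarrow> real) set"
  assumes Ucont: "\<And>\<phi>. \<phi> \<in> U \<Longrightarrow> continuous_on UNIV \<phi>"
    and Ulin: "\<And>\<phi> \<psi> a. \<phi> \<in> U \<Longrightarrow> \<psi> \<in> U \<Longrightarrow> (\<lambda>t. a * \<phi> t + \<psi> t) \<in> U"
    and Uconst: "\<And>c. (\<lambda>t. c) \<in> U"
    and Uaff: "\<And>\<phi> s c. \<phi> \<in> U \<Longrightarrow> (\<lambda>t. \<phi> (s * t + c)) \<in> U"
    and Ulim: "\<And>\<phi>. continuous_on UNIV \<phi> \<Longrightarrow>
        (\<And>R e. e > 0 \<Longrightarrow> \<exists>\<psi>\<in>U. \<forall>t. \<bar>t\<bar> \<le> R \<longrightarrow> \<bar>\<phi> t - \<psi> t\<bar> \<le> e) \<Longrightarrow> \<phi> \<in> U"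
begin

lemma Uscale: "\<phi> \<in> U \<Longrightarrow> (\<lambda>t. a * \<phi> t) \<in> U"
  using Ulin[of \<phi> "\<lambda>t. 0" a] Uconst by simp

lemma Uadd: "\<phi> \<in> U \<Longrightarrow> \<psi> \<in> U \<Longrightarrow> (\<lambda>t. \<phi> t + \<psi> t) \<in> U"
  using Ulin[of \<phi> \<psi> 1] by simp

lemma Usum: "(\<And>i. i < (n::nat) \<Longrightarrow> \<phi> i \<in> U) \<Longrightarrow> (\<lambda>t. \<Sum>i<n. \<phi> i t) \<in> U"
proof (induction n)
  case 0 then show ?case using Uconst[of 0] by simp
next
  case (Suc n)
  have "(\<lambda>t. (\<Sum>i<n. \<phi> i t) + \<phi> n t) \<in> U" by (rule Uadd) (use Suc in auto)
  then show ?case by simp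
qed

lemma Ueq: "\<phi> \<in> U \<Longrightarrow> (\<And>t. \<phi> t = \<psi> t) \<Longrightarrow> \<psi> \<in> U"
proof -
  assume "\<phi> \<in> U" "\<And>t. \<phi> t = \<psi> t"
  then have "\<phi> = \<psi>" by (simp add: fun_eq_iff)
  then show "\<psi> \<in> U" using \<open>\<phi> \<in> U\<close> by simp
qed

lemma Tlemma:
  assumes gU: "g \<in> U" and d: "\<And>t. (g has_real_derivative g' t) (at t)"
    and c: "continuous_on UNIV g'"
  shows "(\<lambda>t. t * g' t) \<in> U"
proof (rule Ulim)
  show "continuous_on UNIV (\<lambda>t. t * g' t)" by (intro continuous_intros c)
  fix R e :: real assume e: "e > 0"
  define R' where "R' = max R 1"
  have R': "R' \<ge> 1" "R \<le> R'" by (auto simp: R'_def)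
  have uc: "uniformly_continuous_on {-2*R'..2*R'} g'"
    by (rule compact_uniformly_continuous) (auto intro: continuous_on_subset[OF c])
  have eR: "e / R' > 0" using e R' by simp
  obtain d where d0: "d > 0" and dd0: "\<forall>x\<in>{-2*R'..2*R'}. \<forall>x'\<in>{-2*R'..2*R'}.
      dist x' x < d \<longrightarrow> dist (g' x') (g' x) < e / R'"
    using uc eR unfolding uniformly_continuous_on_def by blast
  have dd: "\<And>x x'. x \<in> {-2*R'..2*R'} \<Longrightarrow> x' \<in> {-2*R'..2*R'} \<Longrightarrow>
      dist x' x < d \<Longrightarrow> dist (g' x') (g' x) < e / R'" using dd0 by blast
  define h where "h = min (d / (2 * R')) (1/2)"
  have h0: "h > 0" using d0 R' by (simp add: h_def)
  have h1: "h \<le> 1/2" "h * R' < d"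
  proof -
    show "h \<le> 1/2" by (simp add: h_def)
    have "h * R' \<le> d / (2 * R') * R'" using R' by (intro mult_right_mono) (auto simp: h_def)
    also have "\<dots> = d / 2" using R' by simp
    finally show "h * R' < d" using d0 by simp
  qed
  define \<psi> where "\<psi> t = (1/h) * g ((1 + h) * t + 0) + ((-1/h) * g (1 * t + 0) + 0)" for t
  have g1: "(\<lambda>t. g ((1 + h) * t + 0)) \<in> U" by (rule Uaff[OF gU])
  have g2: "(\<lambda>t. g (1 * t + 0)) \<in> U" by (rule Uaff[OF gU])
  have "\<psi> \<in> U" unfolding \<psi>_def[abs_def]
    by (rule Ulin[OF g1 Ulin[OF g2 Uconst]])
  moreover have "\<forall>t. \<bar>t\<bar> \<le> R \<longrightarrow> \<bar>t * g' t - \<psi> t\<bar> \<le> e"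
  proof (intro allI impI)
    fix t :: real assume t: "\<bar>t\<bar> \<le> R"
    have tR: "\<bar>t\<bar> \<le> R'" using t R' by simp
    have b: "\<bar>g (t + h * t) - g t - (t + h * t - t) * g' t\<bar> \<le> \<bar>t + h * t - t\<bar> * (e / R')"
    proof (rule MVB2[OF d])
      fix z assume z: "\<bar>z - t\<bar> \<le> \<bar>t + h * t - t\<bar>"
      have "\<bar>t + h * t - t\<bar> = h * \<bar>t\<bar>" using h0 by (simp add: abs_mult)
      also have "\<dots> \<le> h * R'" using tR h0 by (simp add: mult_left_mono)
      finally have zt: "\<bar>z - t\<bar> \<le> h * R'" using z by simp
      have "h * R' \<le> R'" using h1 R' by (simp add: mult_left_le_one_le)
      then have "z \<in> {-2*R'..2*R'}" "t \<in> {-2*R'..2*R'}" using zt tR by auto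
      moreover have "dist z t < d" using zt h1 by (simp add: dist_real_def)
      ultimately have "dist (g' z) (g' t) < e / R'" using dd[of t z] by blast
      then show "\<bar>g' z - g' t\<bar> \<le> e / R'" by (simp add: dist_real_def)
    qed
    have a1: "(1 + h) * t + 0 = t + h * t" by (simp add: algebra_simps)
    have eq: "\<psi> t - t * g' t = (g (t + h * t) - g t - (t + h * t - t) * g' t) / h"
      unfolding \<psi>_def a1 using h0 by (simp add: diff_divide_distrib add_divide_distrib)
    have "\<bar>\<psi> t - t * g' t\<bar> = \<bar>g (t + h * t) - g t - (t + h * t - t) * g' t\<bar> / h"
      unfolding eq using h0 by (simp add: abs_divide)
    also have "\<dots> \<le> (\<bar>t + h * t - t\<bar> * (e / R')) / h"
      by (rule divide_right_mono[OF b]) (use h0 in simp)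
    also have "\<dots> = \<bar>t\<bar> * (e / R')" using h0 by (simp add: abs_mult)
    also have "\<dots> \<le> R' * (e / R')" using tR e R' by (intro mult_right_mono) auto
    also have "\<dots> = e" using R' by simp
    finally show "\<bar>t * g' t - \<psi> t\<bar> \<le> e" by (simp add: abs_minus_commute)
  qed
  ultimately show "\<exists>\<psi>\<in>U. \<forall>t. \<bar>t\<bar> \<le> R \<longrightarrow> \<bar>t * g' t - \<psi> t\<bar> \<le> e" by blast
qed

lemma powder:
  assumes "D 0 \<in> U" "\<forall>m<k. \<forall>t. (D m has_real_derivative D (Suc m) t) (at t)"
    "\<forall>m\<le>k. continuous_on UNIV (D m)"
  shows "(\<lambda>t. t ^ k * D k t) \<in> U"
  using assms
proof (induction k)
  case 0 then show ?case by simp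
next
  case (Suc k)
  have IH: "(\<lambda>t. t ^ k * D k t) \<in> U" using Suc by auto
  define G' where "G' t = real k * t ^ (k - 1) * D k t + t ^ k * D (Suc k) t" for t
  have dG: "((\<lambda>t. t ^ k * D k t) has_real_derivative G' t) (at t)" for t
    unfolding G'_def using Suc.prems(2)
    by (auto intro!: derivative_eq_intros)
  have cG: "continuous_on UNIV G'" unfolding G'_def[abs_def]
    using Suc.prems(3) by (intro continuous_intros) auto
  have T: "(\<lambda>t. t * G' t) \<in> U" by (rule Tlemma[OF IH dG cG])
  have "(\<lambda>t. (- real k) * (t ^ k * D k t) + t * G' t) \<in> U" by (rule Ulin[OF IH T])
  moreover have "(- real k) * (t ^ k * D k t) + t * G' t = t ^ Suc k * D (Suc k) t" for t
  proof (cases k)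
    case 0 then show ?thesis by (simp add: G'_def)
  next
    case (Suc k') then show ?thesis by (simp add: G'_def algebra_simps)
  qed
  ultimately show ?case by (rule Ueq)
qed

lemma powder_at:
  assumes "D 0 \<in> U" "\<forall>m<k. \<forall>t. (D m has_real_derivative D (Suc m) t) (at t)"
    "\<forall>m\<le>k. continuous_on UNIV (D m)"
  shows "(\<lambda>t. t ^ k * D k b) \<in> U"
proof -
  have shifted: "(\<lambda>t. t ^ k * D k (w * t + b)) \<in> U" if w: "w \<noteq> 0" for w
  proof -
    define D' where "D' m t = w ^ m * D m (w * t + b)" for m t
    have "D' 0 \<in> U" unfolding D'_def[abs_def] using Uaff[OF assms(1)] by simp
    moreover have "\<forall>m<k. \<forall>t. (D' m has_real_derivative D' (Suc m) t) (at t)"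
    proof (intro allI impI)
      fix m t assume m: "m < k"
      have "(D m has_real_derivative D (Suc m) (w * t + b)) (at (w * t + b))" using assms(2) m by auto
      moreover have "((\<lambda>t. w * t + b) has_real_derivative w) (at t)"
        by (auto intro!: derivative_eq_intros)
      ultimately have "((\<lambda>t. D m (w * t + b)) has_real_derivative D (Suc m) (w * t + b) * w) (at t)"
        by (rule DERIV_chain2)
      from DERIV_cmult[OF this, of "w ^ m"]
      show "(D' m has_real_derivative D' (Suc m) t) (at t)"
        unfolding D'_def[abs_def] by (simp add: algebra_simps)
    qed
    moreover have "\<forall>m\<le>k. continuous_on UNIV (D' m)"
    proof (intro allI impI)
      fix m assume "m \<le> k"
      then have cm: "continuous_on UNIV (D m)" using assms(3) by blast
      have "continuous_on UNIV (\<lambda>t. D m (w * t + b))"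
        by (rule continuous_on_compose2[OF cm]) (auto intro!: continuous_intros)
      then show "continuous_on UNIV (D' m)" unfolding D'_def[abs_def]
        by (intro continuous_intros)
    qed
    ultimately have "(\<lambda>t. t ^ k * D' k t) \<in> U" by (rule powder)
    from Uscale[OF this, of "1 / w ^ k"] show ?thesis
      by (rule Ueq) (use w in \<open>simp add: D'_def\<close>)
  qed
  show ?thesis
  proof (rule Ulim)
    show "continuous_on UNIV (\<lambda>t. t ^ k * D k b)" by (intro continuous_intros)
    fix R e :: real assume e: "e > 0"
    define R' where "R' = max R 1"
    have R': "R' \<ge> 1" "R \<le> R'" by (auto simp: R'_def)
    have "isCont (D k) b" using assms(3) by (simp add: continuous_on_eq_continuous_at)
    moreover have "e / R' ^ k > 0" using e R' by simp
    ultimately obtain \<delta> where \<delta>0: "\<delta> > 0" and \<delta>1: "\<forall>y. dist y b < \<delta> \<longrightarrow> dist (D k y) (D k b) < e / R' ^ k"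
      unfolding continuous_at_eps_delta by blast
    have \<delta>: "\<delta> > 0" "\<And>y. \<bar>y - b\<bar> < \<delta> \<Longrightarrow> \<bar>D k y - D k b\<bar> < e / R' ^ k"
      using \<delta>0 \<delta>1 by (auto simp: dist_real_def)
    define w where "w = \<delta> / (2 * R')"
    have w0: "w > 0" using \<delta> R' by (simp add: w_def)
    have "\<forall>t. \<bar>t\<bar> \<le> R \<longrightarrow> \<bar>t ^ k * D k b - t ^ k * D k (w * t + b)\<bar> \<le> e"
    proof (intro allI impI)
      fix t :: real assume "\<bar>t\<bar> \<le> R"
      then have tR: "\<bar>t\<bar> \<le> R'" using R' by simp
      have "\<bar>w * t\<bar> \<le> w * R'" using w0 tR by (simp add: abs_mult mult_left_mono)
      also have "\<dots> = \<delta> / 2" using R' by (simp add: w_def)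
      finally have "\<bar>(w * t + b) - b\<bar> < \<delta>" using \<delta> by simp
      then have dk: "\<bar>D k (w * t + b) - D k b\<bar> < e / R' ^ k" by (rule \<delta>(2))
      have "\<bar>t ^ k * D k b - t ^ k * D k (w * t + b)\<bar> = \<bar>t\<bar> ^ k * \<bar>D k (w * t + b) - D k b\<bar>"
        by (simp add: abs_mult power_abs right_diff_distrib[symmetric] abs_minus_commute)
      also have "\<dots> \<le> R' ^ k * (e / R' ^ k)"
        using dk tR by (intro mult_mono power_mono) auto
      also have "\<dots> = e" using R' by simp
      finally show "\<bar>t ^ k * D k b - t ^ k * D k (w * t + b)\<bar> \<le> e" .
    qed
    then show "\<exists>\<psi>\<in>U. \<forall>t. \<bar>t\<bar> \<le> R \<longrightarrow> \<bar>t ^ k * D k b - \<psi> t\<bar> \<le> e"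
      using shifted[of w] w0 by auto
  qed
qed

end

lemma riemann_bound:
  fixes f :: "real \<Rightarrow> real"
  assumes cf: "continuous_on UNIV f" and h: "h > 0" and n: "n > 0"
    and uc: "\<And>z z'. z \<in> {t..t+h} \<Longrightarrow> z' \<in> {t..t+h} \<Longrightarrow> \<bar>z - z'\<bar> \<le> h / n \<Longrightarrow> \<bar>f z - f z'\<bar> \<le> e"
  shows "\<bar>avg h f t - (\<Sum>i<n. (1 / real n) * f (1 * t + real i * (h / n)))\<bar> \<le> e"
proof -
  define \<delta> where "\<delta> = h / n"
  have \<delta>0: "\<delta> > 0" using h n by (simp add: \<delta>_def)
  define a where "a i = t + real i * \<delta>" for i
  have an: "a n = t + h" using n by (simp add: a_def \<delta>_def)
  have a0: "a 0 = t" by (simp add: a_def)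
  have tel: "anti f (t + h) - anti f t = (\<Sum>i<n. anti f (a (Suc i)) - anti f (a i))"
    using sum_lessThan_telescope[of "\<lambda>i. anti f (a i)" n] an a0 by simp
  have each: "\<bar>anti f (a (Suc i)) - anti f (a i) - \<delta> * f (a i)\<bar> \<le> \<delta> * e" if i: "i < n" for i
  proof -
    have "a i \<le> a (Suc i)" using \<delta>0 by (simp add: a_def)
    moreover have "a (Suc i) - a i = \<delta>" by (simp add: a_def algebra_simps)
    moreover have "a (Suc i) \<le> t + h"
    proof -
      have "real (Suc i) * \<delta> \<le> real n * \<delta>" using i \<delta>0 by (intro mult_right_mono) auto
      then show ?thesis using n by (simp add: a_def \<delta>_def)
    qed
    moreover have "t \<le> a i" using \<delta>0 by (simp add: a_def)
    ultimately have "\<bar>anti f (a (Suc i)) - anti f (a i) - (a (Suc i) - a i) * f (a i)\<bar> \<le> (a (Suc i) - a i) * e"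
    proof (intro MVB[OF _ anti_deriv[OF cf]])
      fix z assume "a i \<le> a (Suc i)" "a (Suc i) - a i = \<delta>" "a (Suc i) \<le> t + h" "t \<le> a i"
        "a i \<le> z" "z \<le> a (Suc i)"
      then show "\<bar>f z - f (a i)\<bar> \<le> e" by (intro uc) (auto simp: \<delta>_def)
    qed simp
    then show ?thesis using \<open>a (Suc i) - a i = \<delta>\<close> by simp
  qed
  have "\<bar>(anti f (t + h) - anti f t) - (\<Sum>i<n. \<delta> * f (a i))\<bar>
        = \<bar>\<Sum>i<n. (anti f (a (Suc i)) - anti f (a i) - \<delta> * f (a i))\<bar>"
    unfolding tel by (simp add: sum_subtractf)
  also have "\<dots> \<le> (\<Sum>i<n. \<bar>anti f (a (Suc i)) - anti f (a i) - \<delta> * f (a i)\<bar>)" by (rule sum_abs)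
  also have "\<dots> \<le> (\<Sum>i<n. \<delta> * e)" by (rule sum_mono) (use each in auto)
  also have "\<dots> = h * e" using n by (simp add: \<delta>_def)
  finally have b: "\<bar>(anti f (t + h) - anti f t) - (\<Sum>i<n. \<delta> * f (a i))\<bar> \<le> h * e" .
  have "avg h f t - (\<Sum>i<n. (1 / real n) * f (1 * t + real i * (h / n)))
      = ((anti f (t + h) - anti f t) - (\<Sum>i<n. \<delta> * f (a i))) / h"
    using h n by (simp add: avg_def a_def \<delta>_def diff_divide_distrib sum_divide_distrib)
  then have "\<bar>avg h f t - (\<Sum>i<n. (1 / real n) * f (1 * t + real i * (h / n)))\<bar>
      = \<bar>(anti f (t + h) - anti f t) - (\<Sum>i<n. \<delta> * f (a i))\<bar> / h" using h by (simp add: abs_divide)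
  also have "\<dots> \<le> (h * e) / h" by (rule divide_right_mono[OF b]) (use h in simp)
  also have "\<dots> = e" using h by simp
  finally show ?thesis .
qed

context ucls begin

lemma avgU:
  assumes fU: "f \<in> U" and h: "h > 0"
  shows "avg h f \<in> U"
proof (rule Ulim)
  have cf: "continuous_on UNIV f" by (rule Ucont[OF fU])
  show "continuous_on UNIV (avg h f)" by (rule avg_cont[OF cf])
  fix R e :: real assume e: "e > 0"
  define S where "S = {-\<bar>R\<bar>..\<bar>R\<bar> + h}"
  have "uniformly_continuous_on S f"
    unfolding S_def by (rule compact_uniformly_continuous) (auto intro: continuous_on_subset[OF cf])
  then obtain d where d0: "d > 0" and dd: "\<forall>x\<in>S. \<forall>x'\<in>S. dist x' x < d \<longrightarrow> dist (f x') (f x) < e"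
    using e unfolding uniformly_continuous_on_def by blast
  define n where "n = nat \<lceil>h / d\<rceil> + 1"
  have n0: "n > 0" by (simp add: n_def)
  have hn: "h / n < d"
  proof -
    have "h / d < real n" unfolding n_def by linarith
    then have "h < real n * d" using d0 by (simp add: divide_less_eq)
    then show ?thesis using n0 by (simp add: divide_less_eq mult.commute)
  qed
  define \<psi> where "\<psi> t = (\<Sum>i<n. (1 / real n) * f (1 * t + real i * (h / n)))" for t
  have "\<psi> \<in> U" unfolding \<psi>_def[abs_def]
    by (intro Usum Uscale Uaff fU)
  moreover have "\<bar>avg h f t - \<psi> t\<bar> \<le> e" if t: "\<bar>t\<bar> \<le> R" for t
    unfolding \<psi>_def
  proof (rule riemann_bound[OF cf h n0])
    fix z z' assume z: "z \<in> {t..t+h}" "z' \<in> {t..t+h}" "\<bar>z - z'\<bar> \<le> h / real n"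
    have "z \<in> S" "z' \<in> S" using z t by (auto simp: S_def)
    moreover have "dist z z' < d" using z hn by (simp add: dist_real_def)
    ultimately have "dist (f z) (f z') < e" using dd by blast
    then show "\<bar>f z - f z'\<bar> \<le> e" by (simp add: dist_real_def)
  qed
  ultimately show "\<exists>\<psi>\<in>U. \<forall>t. \<bar>t\<bar> \<le> R \<longrightarrow> \<bar>avg h f t - \<psi> t\<bar> \<le> e" by blast
qed

lemma avgpowU: "f \<in> U \<Longrightarrow> h > 0 \<Longrightarrow> (avg h ^^ k) f \<in> U"
  by (induction k) (auto intro: avgU)

lemma monoU:
  assumes rU: "\<rho> \<in> U" and np: "\<not> (\<exists>p. \<forall>x. \<rho> x = poly p x)"
  shows "(\<lambda>t. t ^ k) \<in> U"
proof (cases "k = 0")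
  case True then show ?thesis using Uconst[of 1] by simp
next
  case False
  then have k0: "k > 0" by simp
  show ?thesis
  proof (rule ccontr)
    assume nU: "(\<lambda>t. t ^ k) \<notin> U"
    have cr: "continuous_on UNIV \<rho>" by (rule Ucont[OF rU])
    have polyh: "\<exists>q. degree q < k \<and> (\<forall>x. (avg h ^^ k) \<rho> x = poly q x)" if h: "h > 0" for h
    proof -
      obtain D where D: "D 0 = (avg h ^^ k) \<rho>" "\<forall>m<k. \<forall>t. (D m has_real_derivative D (Suc m) t) (at t)"
        "\<forall>m\<le>k. continuous_on UNIV (D m)" "D k = (dif h ^^ k) \<rho>"
        using smooth_avg[OF cr, where h=h and k=k] by blast
      have D0U: "D 0 \<in> U" using D(1) avgpowU[OF rU h] by simp
      have Dk: "\<forall>t. D k t = 0"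
      proof (rule ccontr)
        assume "\<not> (\<forall>t. D k t = 0)"
        then obtain b where b: "D k b \<noteq> 0" by blast
        have "(\<lambda>t. t ^ k * D k b) \<in> U" by (rule powder_at[OF D0U D(2) D(3)])
        from Uscale[OF this, of "1 / D k b"] have "(\<lambda>t. t ^ k) \<in> U"
          by (rule Ueq) (use b in simp)
        then show False using nU by simp
      qed
      from deriv_zero_poly[OF D(2) Dk] k0 D(1) show ?thesis by auto
    qed
    define q where "q n = (SOME q. degree q < k \<and> (\<forall>x. (avg (1 / real (Suc n)) ^^ k) \<rho> x = poly q x))" for n
    have qn: "degree (q n) < k \<and> (\<forall>x. (avg (1 / real (Suc n)) ^^ k) \<rho> x = poly (q n) x)" for n
      unfolding q_def by (rule someI_ex) (rule polyh, simp)
    have conv: "(\<lambda>n. (avg (1 / real (Suc n)) ^^ k) \<rho> x) \<longlonglongrightarrow> \<rho> x" for x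
    proof (rule LIMSEQ_I)
      fix r :: real assume r: "r > 0"
      have "isCont \<rho> x" using cr by (simp add: continuous_on_eq_continuous_at)
      then obtain \<delta> where \<delta>0: "\<delta> > 0" and \<delta>1: "\<forall>y. dist y x < \<delta> \<longrightarrow> dist (\<rho> y) (\<rho> x) < r / 2"
        using r unfolding continuous_at_eps_delta by (meson half_gt_zero)
      obtain N :: nat where N: "real k / \<delta> < real N" using reals_Archimedean2 by blast
      have "norm ((avg (1 / real (Suc n)) ^^ k) \<rho> x - \<rho> x) < r" if n: "n \<ge> N" for n
      proof -
        have kd: "real k * (1 / real (Suc n)) < \<delta>"
        proof -
          have "real k < \<delta> * real N" using N \<delta>0 by (simp add: divide_less_eq mult.commute)
          also have "\<dots> \<le> \<delta> * real (Suc n)" using n \<delta>0 by (intro mult_left_mono) auto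
          finally show ?thesis by (simp add: divide_less_eq mult.commute)
        qed
        have "\<bar>(avg (1 / real (Suc n)) ^^ k) \<rho> (x + 0) - \<rho> x\<bar> \<le> r / 2"
        proof (rule avgpow_close[OF cr])
          fix s assume s: "0 \<le> s" "s \<le> real k * (1 / real (Suc n))"
          then have "dist (x + 0 + s) x < \<delta>" using kd by (simp add: dist_real_def)
          then have "dist (\<rho> (x + 0 + s)) (\<rho> x) < r / 2" using \<delta>1 by blast
          then show "\<bar>\<rho> (x + 0 + s) - \<rho> x\<bar> \<le> r / 2" by (simp add: dist_real_def)
        qed simp
        then show ?thesis using r by simp
      qed
      then show "\<exists>no. \<forall>n\<ge>no. norm ((avg (1 / real (Suc n)) ^^ k) \<rho> x - \<rho> x) < r" by blast
    qed
    have "\<exists>p. \<forall>x. \<rho> x = poly p x"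
      by (rule lagrange_limit[OF k0 _ _ conv]) (use qn in blast)+
    then show False using np by simp
  qed
qed

lemma expU:
  assumes mono: "\<And>k. (\<lambda>t. t ^ k) \<in> U"
  shows "exp \<in> U"
proof (rule Ulim)
  show "continuous_on UNIV (exp::real\<Rightarrow>real)" by (intro continuous_at_imp_continuous_on ballI isCont_exp)
  fix R e :: real assume e: "e > 0"
  define R' where "R' = \<bar>R\<bar>"
  have "summable (\<lambda>n. inverse (fact n) * R' ^ n)" by (rule summable_exp)
  then have "(\<lambda>n. inverse (fact n) * R' ^ n) \<longlonglongrightarrow> 0" by (rule summable_LIMSEQ_zero)
  moreover have "e / exp R' > 0" using e by simp
  ultimately obtain n where n: "norm (inverse (fact n) * R' ^ n - 0) < e / exp R'"
    using LIMSEQ_D by blast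
  define \<psi> where "\<psi> t = (\<Sum>m<n. (1 / fact m) * t ^ m)" for t :: real
  have "\<psi> \<in> U" unfolding \<psi>_def[abs_def] by (intro Usum Uscale mono)
  moreover have "\<bar>exp t - \<psi> t\<bar> \<le> e" if t: "\<bar>t\<bar> \<le> R" for t
  proof -
    obtain s where s: "\<bar>s\<bar> \<le> \<bar>t\<bar>" "exp t = (\<Sum>m<n. (t ^ m) / fact m) + (exp s / fact n) * t ^ n"
      using Maclaurin_exp_le by blast
    have "exp t - \<psi> t = (exp s / fact n) * t ^ n" using s by (simp add: \<psi>_def)
    then have "\<bar>exp t - \<psi> t\<bar> = exp s * (inverse (fact n) * \<bar>t\<bar> ^ n)"
      by (simp add: abs_mult power_abs divide_inverse)
    also have "\<dots> \<le> exp R' * (inverse (fact n) * R' ^ n)"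
      using s t by (intro mult_mono power_mono mult_left_mono) (auto simp: R'_def)
    also have "\<dots> \<le> exp R' * (e / exp R')"
      using n by (intro mult_left_mono) (auto simp: R'_def)
    also have "\<dots> = e" by simp
    finally show ?thesis .
  qed
  ultimately show "\<exists>\<psi>\<in>U. \<forall>t. \<bar>t\<bar> \<le> R \<longrightarrow> \<bar>exp t - \<psi> t\<bar> \<le> e" by blast
qed

end

lemma act_cont:
  assumes cr: "continuous_on UNIV \<rho>" and cy: "\<And>i. continuous_on S (\<lambda>x. y x i)"
  shows "continuous_on S (\<lambda>x. act \<rho> n (y x) j)"
proof (cases "j < n")
  case True
  have "continuous_on S (\<lambda>x. \<rho> (y x j))"
    by (rule continuous_on_compose2[OF cr cy]) auto
  then show ?thesis using True by (simp add: act_def)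
next
  case False then show ?thesis by (simp add: act_def)
qed

lemma affine_cont:
  assumes cy: "\<And>i. continuous_on S (\<lambda>x. y x i)"
  shows "continuous_on S (\<lambda>x. affine m n Ab (y x) i)"
proof (cases "i < m")
  case True
  have "continuous_on S (\<lambda>x. (\<Sum>j<n. fst Ab i j * y x j) + snd Ab i)"
    by (intro continuous_intros cy)
  then show ?thesis using True by (simp add: affine_def)
next
  case False then show ?thesis by (simp add: affine_def)
qed

lemma net_tail_cont:
  assumes cr: "continuous_on UNIV \<rho>" and cy: "\<And>i. continuous_on S (\<lambda>x. y x i)"
  shows "continuous_on S (\<lambda>x. net_tail \<rho> n ms \<Phi> (y x) i)"
  using cy
proof (induction ms arbitrary: n \<Phi> y i)
  case Nil
  then show ?case by (cases \<Phi>) auto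
next
  case (Cons m ms)
  show ?case
  proof (cases \<Phi>)
    case Nil then show ?thesis using Cons.prems by simp
  next
    case (Cons Ab \<Phi>')
    have "continuous_on S (\<lambda>x. net_tail \<rho> m ms \<Phi>' (affine m n Ab (act \<rho> n (y x))) i)"
      by (rule Cons.IH) (intro affine_cont act_cont[OF cr] Cons.prems)
    then show ?thesis using Cons by simp
  qed
qed

lemma RNN_cont:
  assumes cr: "continuous_on UNIV \<rho>" and f: "f \<in> RNN \<rho> Ns"
  shows "continuous_on S f"
proof -
  from f obtain W c \<Phi> where fd: "f = (\<lambda>x. net_tail \<rho> (hd Ns) (tl Ns @ [1]) \<Phi>
                     (\<lambda>i. if i < hd Ns then W i \<bullet> x + c i else 0) 0)"
    unfolding RNN_def by blast
  have "continuous_on S (\<lambda>x. (\<lambda>i. if i < hd Ns then W i \<bullet> x + c i else 0) i)" for i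
    by (cases "i < hd Ns") (auto intro!: continuous_intros)
  then show ?thesis unfolding fd by (rule net_tail_cont[OF cr])
qed

fun chain :: "(real \<Rightarrow> real) \<Rightarrow> (real \<times> real) list \<Rightarrow> real \<Rightarrow> real" where
  "chain \<rho> [] z = z"
| "chain \<rho> (p # ps) z = chain \<rho> ps (fst p * \<rho> z + snd p)"

definition scal :: "real \<times> real \<Rightarrow> layer" where
  "scal p = ((\<lambda>i j. if i = 0 \<and> j = 0 then fst p else 0), (\<lambda>i. if i = 0 then snd p else 0))"

lemma net_tail_chain:
  assumes "length ms = length ps" "\<forall>m\<in>set ms. 0 < m" "n > 0"
  shows "net_tail \<rho> n ms (map scal ps) y 0 = chain \<rho> ps (y 0)"
  using assms
proof (induction ps arbitrary: n ms y)
  case Nil then show ?case by simp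
next
  case (Cons p ps)
  then obtain m ms' where ms: "ms = m # ms'" by (cases ms) auto
  have m0: "m > 0" using Cons.prems ms by simp
  have "net_tail \<rho> n ms (map scal (p # ps)) y 0 =
        net_tail \<rho> m ms' (map scal ps) (affine m n (scal p) (act \<rho> n y)) 0" by (simp add: ms)
  also have "\<dots> = chain \<rho> ps (affine m n (scal p) (act \<rho> n y) 0)"
    by (rule Cons.IH) (use Cons.prems ms m0 in auto)
  also have "affine m n (scal p) (act \<rho> n y) 0 = fst p * \<rho> (y 0) + snd p"
  proof -
    have "(\<Sum>j<n. fst (scal p) 0 j * act \<rho> n y j) = (\<Sum>j<n. if j = 0 then fst p * \<rho> (y 0) else 0)"
      by (rule sum.cong) (auto simp: scal_def act_def Cons.prems)
    also have "\<dots> = fst p * \<rho> (y 0)" using Cons.prems by simp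
    finally show ?thesis using m0 by (simp add: affine_def scal_def)
  qed
  finally show ?case by simp
qed

definition modl :: "real \<Rightarrow> real \<Rightarrow> layer \<Rightarrow> layer" where
  "modl a c Ab = ((\<lambda>i j. a * fst Ab i j), (\<lambda>i. a * snd Ab i + c))"

lemma net_tail_mod:
  assumes "length ms = length \<Phi>" "\<Phi> \<noteq> []" "\<forall>m\<in>set ms. 0 < m"
  shows "net_tail \<rho> n ms (butlast \<Phi> @ [modl a c (last \<Phi>)]) y 0 = a * net_tail \<rho> n ms \<Phi> y 0 + c"
  using assms
proof (induction \<Phi> arbitrary: n ms y)
  case Nil then show ?case by simp
next
  case (Cons Ab \<Phi>)
  then obtain m ms' where ms: "ms = m # ms'" by (cases ms) auto
  have m0: "m > 0" using Cons.prems ms by simp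
  show ?case
  proof (cases "\<Phi> = []")
    case True
    then have ms': "ms' = []" using Cons.prems ms by simp
    have "(\<Sum>j<n. a * fst Ab 0 j * act \<rho> n y j) = a * (\<Sum>j<n. fst Ab 0 j * act \<rho> n y j)"
      by (simp add: sum_distrib_left mult.assoc)
    then show ?thesis using True ms ms' m0 by (simp add: affine_def modl_def algebra_simps)
  next
    case False
    have "net_tail \<rho> n ms (butlast (Ab # \<Phi>) @ [modl a c (last (Ab # \<Phi>))]) y 0
        = net_tail \<rho> m ms' (butlast \<Phi> @ [modl a c (last \<Phi>)]) (affine m n Ab (act \<rho> n y)) 0"
      using False ms by simp
    also have "\<dots> = a * net_tail \<rho> m ms' \<Phi> (affine m n Ab (act \<rho> n y)) 0 + c"
      by (rule Cons.IH) (use Cons.prems ms False in auto)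
    finally show ?thesis using ms by simp
  qed
qed

lemma RNN_mod:
  assumes "f \<in> RNN \<rho> Ns" "Ns \<noteq> []" "\<forall>n\<in>set Ns. 0 < n"
  shows "(\<lambda>x. a * f x + c) \<in> RNN \<rho> Ns"
proof -
  from assms(1) obtain W cc \<Phi> where fd: "f = (\<lambda>x. net_tail \<rho> (hd Ns) (tl Ns @ [1]) \<Phi>
                     (\<lambda>i. if i < hd Ns then W i \<bullet> x + cc i else 0) 0)" and l: "length \<Phi> = length Ns"
    unfolding RNN_def by blast
  have ne: "\<Phi> \<noteq> []" using l assms(2) by auto
  have pos: "\<forall>m\<in>set (tl Ns @ [1]). 0 < m" using assms(2,3) by (cases Ns) auto
  have len: "length (tl Ns @ [1]) = length \<Phi>" using l assms(2) by (cases Ns) auto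
  define \<Phi>' where "\<Phi>' = butlast \<Phi> @ [modl a c (last \<Phi>)]"
  have "length \<Phi>' = length Ns" using l ne assms(2) by (cases Ns) (auto simp: \<Phi>'_def)
  moreover have "(\<lambda>x. a * f x + c) = (\<lambda>x. net_tail \<rho> (hd Ns) (tl Ns @ [1]) \<Phi>'
                     (\<lambda>i. if i < hd Ns then W i \<bullet> x + cc i else 0) 0)"
    unfolding fd \<Phi>'_def using net_tail_mod[OF len ne pos] by simp
  ultimately show ?thesis unfolding RNN_def by blast
qed

lemma RNN_chain:
  assumes "Ns \<noteq> []" "\<forall>n\<in>set Ns. 0 < n" "length ps = length Ns"
  shows "(\<lambda>x::real^'d. chain \<rho> ps (w \<bullet> x + b)) \<in> RNN \<rho> Ns"
proof -
  have pos: "\<forall>m\<in>set (tl Ns @ [1]). 0 < m" using assms(1,2) by (cases Ns) auto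
  have len: "length (tl Ns @ [1]) = length ps" using assms by (cases Ns) auto
  have h0: "hd Ns > 0" using assms(1,2) by (cases Ns) auto
  define W where "W i = (if i = 0 then w else 0)" for i :: nat
  define cc where "cc i = (if i = 0 then b else 0)" for i :: nat
  have "(\<lambda>x::real^'d. chain \<rho> ps (w \<bullet> x + b)) = (\<lambda>x. net_tail \<rho> (hd Ns) (tl Ns @ [1]) (map scal ps)
                     (\<lambda>i. if i < hd Ns then W i \<bullet> x + cc i else 0) 0)"
    using net_tail_chain[OF len pos h0] h0 by (simp add: W_def cc_def)
  moreover have "length (map scal ps) = length Ns" using assms by simp
  ultimately show ?thesis unfolding RNN_def by blast
qed

lemma chain_approx:
  assumes cr: "continuous_on UNIV \<rho>" and dx: "(\<rho> has_real_derivative D) (at x0)" and D0: "D \<noteq> 0"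
  shows "\<forall>R \<epsilon> a c. \<epsilon> > 0 \<longrightarrow> (\<exists>ps. length ps = Suc m \<and> (\<forall>z. \<bar>\<rho> z\<bar> \<le> R \<longrightarrow> \<bar>chain \<rho> ps z - (a * \<rho> z + c)\<bar> < \<epsilon>))"
proof (induction m)
  case 0
  show ?case
  proof (intro allI impI)
    fix R \<epsilon> a c :: real assume "\<epsilon> > 0"
    then show "\<exists>ps. length ps = Suc 0 \<and> (\<forall>z. \<bar>\<rho> z\<bar> \<le> R \<longrightarrow> \<bar>chain \<rho> ps z - (a * \<rho> z + c)\<bar> < \<epsilon>)"
      by (intro exI[of _ "[(a, c)]"]) simp
  qed
next
  case (Suc m)
  show ?case
  proof (intro allI impI)
    fix R \<epsilon> a c :: real assume e: "\<epsilon> > 0"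
    define R1 where "R1 = \<bar>R\<bar> + 1"
    have R1: "R1 \<ge> 1" "R \<le> R1" by (auto simp: R1_def)
    define \<eta> where "\<eta> = \<epsilon> / (2 * (\<bar>a\<bar> + 1))"
    have \<eta>0: "\<eta> > 0" using e by (simp add: \<eta>_def)
    have lim: "(\<lambda>y. (\<rho> (x0 + y) - \<rho> x0) / y) \<midarrow>0\<rightarrow> D" by (rule DERIV_D[OF dx])
    have pos: "\<eta> * \<bar>D\<bar> / R1 > 0" using \<eta>0 D0 R1 by simp
    obtain \<delta> where \<delta>0: "\<delta> > 0" and
      \<delta>1: "\<forall>y. y \<noteq> 0 \<and> norm (y - 0) < \<delta> \<longrightarrow> norm ((\<rho> (x0 + y) - \<rho> x0) / y - D) < \<eta> * \<bar>D\<bar> / R1"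
      using LIM_D[OF lim pos] by blast
    define h where "h = \<delta> / (2 * R1)"
    have h0: "h > 0" using \<delta>0 R1 by (simp add: h_def)
    have key: "\<bar>(\<rho> (x0 + h * u) - \<rho> x0) / (h * D) - u\<bar> \<le> \<eta>" if u: "\<bar>u\<bar> \<le> R1" for u
    proof (cases "u = 0")
      case True then show ?thesis using \<eta>0 by simp
    next
      case False
      have "\<bar>h * u\<bar> \<le> h * R1" using h0 u by (simp add: abs_mult mult_left_mono)
      also have "\<dots> = \<delta> / 2" using R1 by (simp add: h_def)
      finally have "\<bar>h * u\<bar> < \<delta>" using \<delta>0 by simp
      moreover have "h * u \<noteq> 0" using False h0 by simp
      ultimately have q: "\<bar>(\<rho> (x0 + h * u) - \<rho> x0) / (h * u) - D\<bar> < \<eta> * \<bar>D\<bar> / R1"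
        using \<delta>1 by auto
      have eq: "(\<rho> (x0 + h * u) - \<rho> x0) / (h * D) - u = ((\<rho> (x0 + h * u) - \<rho> x0) / (h * u) - D) * (u / D)"
        using False h0 D0 by (simp add: field_simps)
      have "\<bar>(\<rho> (x0 + h * u) - \<rho> x0) / (h * D) - u\<bar> = \<bar>(\<rho> (x0 + h * u) - \<rho> x0) / (h * u) - D\<bar> * (\<bar>u\<bar> / \<bar>D\<bar>)"
        unfolding eq by (simp add: abs_mult abs_divide)
      also have "\<dots> \<le> (\<eta> * \<bar>D\<bar> / R1) * (R1 / \<bar>D\<bar>)"
        using q u D0 by (intro mult_mono divide_right_mono) auto
      also have "\<dots> = \<eta>" using D0 R1 by simp
      finally show ?thesis .
    qed
    define S where "S = {x0 - h * R1 .. x0 + h * R1}"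
    have "bounded (\<rho> ` S)"
      unfolding S_def by (intro compact_imp_bounded compact_continuous_image continuous_on_subset[OF cr]) auto
    then obtain B where B: "\<And>v. v \<in> S \<Longrightarrow> \<bar>\<rho> v\<bar> \<le> B" unfolding bounded_iff by auto
    define a' where "a' = a / (h * D)"
    define c' where "c' = c - a * \<rho> x0 / (h * D)"
    have "\<epsilon> / 2 > 0" using e by simp
    then obtain ps' where ps': "length ps' = Suc m"
      "\<forall>z. \<bar>\<rho> z\<bar> \<le> B \<longrightarrow> \<bar>chain \<rho> ps' z - (a' * \<rho> z + c')\<bar> < \<epsilon> / 2"
      using Suc.IH by blast
    have "\<bar>chain \<rho> ((h, x0) # ps') z - (a * \<rho> z + c)\<bar> < \<epsilon>" if z: "\<bar>\<rho> z\<bar> \<le> R" for z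
    proof -
      define u where "u = \<rho> z"
      define v where "v = x0 + h * u"
      have uR: "\<bar>u\<bar> \<le> R1" using z R1 by (simp add: u_def)
      have "\<bar>h * u\<bar> \<le> h * R1" using h0 uR by (simp add: abs_mult mult_left_mono)
      then have "v \<in> S" by (auto simp: S_def v_def)
      then have c1: "\<bar>chain \<rho> ps' v - (a' * \<rho> v + c')\<bar> < \<epsilon> / 2" using ps'(2) B by blast
      have "a' * \<rho> v + c' - (a * u + c) = a * ((\<rho> (x0 + h * u) - \<rho> x0) / (h * D) - u)"
        using h0 D0 unfolding a'_def c'_def v_def by (simp add: field_simps)
      then have "\<bar>a' * \<rho> v + c' - (a * u + c)\<bar> \<le> \<bar>a\<bar> * \<eta>"
        using key[OF uR] by (simp add: abs_mult mult_left_mono)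
      also have "\<dots> < \<epsilon> / 2"
      proof -
        have "\<bar>a\<bar> * \<eta> = \<epsilon> / 2 * (\<bar>a\<bar> / (\<bar>a\<bar> + 1))" by (simp add: \<eta>_def field_simps)
        also have "\<dots> < \<epsilon> / 2 * 1" using e by (intro mult_strict_left_mono) auto
        finally show ?thesis by simp
      qed
      finally have c2: "\<bar>a' * \<rho> v + c' - (a * u + c)\<bar> < \<epsilon> / 2" .
      have "chain \<rho> ((h, x0) # ps') z = chain \<rho> ps' v" by (simp add: v_def u_def add.commute)
      moreover have "\<bar>chain \<rho> ps' v - (a * u + c)\<bar> < \<epsilon>" 
      proof -
        have "\<bar>chain \<rho> ps' v - (a * u + c)\<bar> \<le> \<bar>chain \<rho> ps' v - (a' * \<rho> v + c')\<bar> + \<bar>a' * \<rho> v + c' - (a * u + c)\<bar>"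
          using abs_triangle_ineq[of "chain \<rho> ps' v - (a' * \<rho> v + c')" "a' * \<rho> v + c' - (a * u + c)"] by simp
        then show ?thesis using c1 c2 by linarith
      qed
      ultimately show ?thesis unfolding u_def by simp
    qed
    then show "\<exists>ps. length ps = Suc (Suc m) \<and> (\<forall>z. \<bar>\<rho> z\<bar> \<le> R \<longrightarrow> \<bar>chain \<rho> ps z - (a * \<rho> z + c)\<bar> < \<epsilon>)"
      using ps'(1) by (intro exI[of _ "(h, x0) # ps'"]) auto
  qed
qed

lemma sd_le: "\<Omega> \<noteq> {} \<Longrightarrow> (\<And>x. x \<in> \<Omega> \<Longrightarrow> \<bar>f x - g x\<bar> \<le> e) \<Longrightarrow> sup_dist \<Omega> f g \<le> e"
  unfolding sup_dist_def by (simp add: cSUP_least)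

lemma sd_ge:
  fixes \<Omega> :: "'a::metric_space set"
  assumes "compact \<Omega>" "continuous_on \<Omega> f" "continuous_on \<Omega> g" "x \<in> \<Omega>"
  shows "\<bar>f x - g x\<bar> \<le> sup_dist \<Omega> f g"
proof -
  have "continuous_on \<Omega> (\<lambda>x. \<bar>f x - g x\<bar>)" using assms by (intro continuous_intros)
  then have "bounded ((\<lambda>x. \<bar>f x - g x\<bar>) ` \<Omega>)"
    using assms(1) by (intro compact_imp_bounded compact_continuous_image)
  then have "bdd_above ((\<lambda>x. \<bar>f x - g x\<bar>) ` \<Omega>)" by (rule bounded_imp_bdd_above)
  then show ?thesis using assms(4) unfolding sup_dist_def by (auto intro: cSUP_upper)
qed

inductive_set ER :: "('a::real_inner \<Rightarrow> real) set" where
  ER_base: "(\<lambda>x. c * exp (w \<bullet> x)) \<in> ER"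
| ER_add: "f \<in> ER \<Longrightarrow> g \<in> ER \<Longrightarrow> (\<lambda>x. f x + g x) \<in> ER"

lemma ER_mult_base:
  assumes "g \<in> ER"
  shows "(\<lambda>x. c * exp (w \<bullet> x) * g x) \<in> ER"
  using assms
proof induction
  case (ER_base c' w')
  have "(\<lambda>x. (c * c') * exp ((w + w') \<bullet> x)) \<in> ER" by (rule ER.ER_base)
  moreover have "(\<lambda>x. (c * c') * exp ((w + w') \<bullet> x)) = (\<lambda>x. c * exp (w \<bullet> x) * (c' * exp (w' \<bullet> x)))"
    by (auto simp: inner_add_left exp_add fun_eq_iff)
  ultimately show ?case by simp
next
  case (ER_add f g)
  have "(\<lambda>x. c * exp (w \<bullet> x) * f x + c * exp (w \<bullet> x) * g x) \<in> ER" by (rule ER.ER_add[OF ER_add.IH])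
  then show ?case by (simp add: distrib_left)
qed

lemma ER_mult:
  assumes "f \<in> ER" "g \<in> ER"
  shows "(\<lambda>x. f x * g x) \<in> ER"
  using assms(1)
proof induction
  case (ER_base c w) then show ?case by (rule ER_mult_base[OF assms(2)])
next
  case (ER_add f1 f2)
  have "(\<lambda>x. f1 x * g x + f2 x * g x) \<in> ER" by (rule ER.ER_add[OF ER_add.IH])
  then show ?case by (simp add: distrib_right)
qed

lemma ER_cont: "f \<in> ER \<Longrightarrow> continuous_on S f"
  by (induction rule: ER.induct) (auto intro!: continuous_intros)

lemma ER_const: "(\<lambda>x. c) \<in> ER"
proof -
  have "(\<lambda>x::'a::real_inner. c * exp (0 \<bullet> x)) \<in> ER" by (rule ER_base)
  moreover have "(\<lambda>x::'a. c * exp (0 \<bullet> x)) = (\<lambda>x. c)" by simp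
  ultimately show ?thesis by simp
qed

lemma ER_sep:
  fixes x y :: "'a::real_inner"
  assumes "x \<noteq> y"
  shows "\<exists>f\<in>ER. f x \<noteq> f y"
proof -
  have "(x - y) \<bullet> x - (x - y) \<bullet> y = (x - y) \<bullet> (x - y)" by (simp add: inner_diff_right)
  moreover have "(x - y) \<bullet> (x - y) > 0" using assms by simp
  ultimately have "(x - y) \<bullet> x \<noteq> (x - y) \<bullet> y" by linarith
  then have "1 * exp ((x - y) \<bullet> x) \<noteq> 1 * exp ((x - y) \<bullet> y)" by simp
  then show ?thesis by (intro bexI[OF _ ER_base[of 1 "x - y"]]) simp
qed

locale netctx =
  fixes \<rho> :: "real \<Rightarrow> real" and Ns :: "nat list" and \<Omega> :: "(real^'d) set"
  assumes Ns0: "Ns \<noteq> []" and Nspos: "\<forall>n\<in>set Ns. 0 < n" and cpt: "compact \<Omega>" and ne: "\<Omega> \<noteq> {}"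
    and cr: "continuous_on UNIV \<rho>"
begin

abbreviation "AA \<equiv> C_closure \<Omega> (RNN \<rho> Ns)"

lemma memA: "g \<in> AA \<longleftrightarrow> continuous_on \<Omega> g \<and> (\<forall>\<delta>>0. \<exists>f\<in>RNN \<rho> Ns. \<forall>x\<in>\<Omega>. \<bar>f x - g x\<bar> \<le> \<delta>)"
proof
  assume g: "g \<in> AA"
  then have cg: "continuous_on \<Omega> g" by (simp add: C_closure_def)
  have "\<exists>f\<in>RNN \<rho> Ns. \<forall>x\<in>\<Omega>. \<bar>f x - g x\<bar> \<le> \<delta>" if d: "\<delta> > 0" for \<delta>
  proof -
    obtain f where f: "f \<in> RNN \<rho> Ns" "sup_dist \<Omega> f g < \<delta>" using g d by (auto simp: C_closure_def)
    have "\<bar>f x - g x\<bar> \<le> \<delta>" if "x \<in> \<Omega>" for x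
      using sd_ge[OF cpt RNN_cont[OF cr f(1)] cg that] f(2) by simp
    then show ?thesis using f(1) by blast
  qed
  then show "continuous_on \<Omega> g \<and> (\<forall>\<delta>>0. \<exists>f\<in>RNN \<rho> Ns. \<forall>x\<in>\<Omega>. \<bar>f x - g x\<bar> \<le> \<delta>)" using cg by blast
next
  assume a: "continuous_on \<Omega> g \<and> (\<forall>\<delta>>0. \<exists>f\<in>RNN \<rho> Ns. \<forall>x\<in>\<Omega>. \<bar>f x - g x\<bar> \<le> \<delta>)"
  have "\<exists>f\<in>RNN \<rho> Ns. sup_dist \<Omega> f g < \<delta>" if d: "\<delta> > 0" for \<delta>
  proof -
    obtain f where f: "f \<in> RNN \<rho> Ns" "\<forall>x\<in>\<Omega>. \<bar>f x - g x\<bar> \<le> \<delta> / 2" using a d by (meson half_gt_zero)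
    have "sup_dist \<Omega> f g \<le> \<delta> / 2" by (rule sd_le[OF ne]) (use f(2) in auto)
    then show ?thesis using f(1) d by (intro bexI[OF _ f(1)]) simp
  qed
  then show "g \<in> AA" using a by (simp add: C_closure_def)
qed

lemma contA: "g \<in> AA \<Longrightarrow> continuous_on \<Omega> g"
  by (simp add: C_closure_def)

lemma closedA:
  assumes cg: "continuous_on \<Omega> g" and ap: "\<And>\<delta>. \<delta> > 0 \<Longrightarrow> \<exists>f\<in>AA. \<forall>x\<in>\<Omega>. \<bar>f x - g x\<bar> \<le> \<delta>"
  shows "g \<in> AA"
  unfolding memA
proof (intro conjI cg allI impI)
  fix \<delta> :: real assume d: "\<delta> > 0"
  obtain f1 where f1: "f1 \<in> AA" "\<forall>x\<in>\<Omega>. \<bar>f1 x - g x\<bar> \<le> \<delta> / 2" using ap[of "\<delta>/2"] d by auto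
  obtain f where f: "f \<in> RNN \<rho> Ns" "\<forall>x\<in>\<Omega>. \<bar>f x - f1 x\<bar> \<le> \<delta> / 2" using f1(1) d unfolding memA
    by (meson half_gt_zero)
  have "\<forall>x\<in>\<Omega>. \<bar>f x - g x\<bar> \<le> \<delta>"
  proof
    fix x assume "x \<in> \<Omega>"
    then have "\<bar>f x - f1 x\<bar> \<le> \<delta> / 2" "\<bar>f1 x - g x\<bar> \<le> \<delta> / 2" using f f1 by auto
    then show "\<bar>f x - g x\<bar> \<le> \<delta>" by linarith
  qed
  then show "\<exists>f\<in>RNN \<rho> Ns. \<forall>x\<in>\<Omega>. \<bar>f x - g x\<bar> \<le> \<delta>" using f(1) by blast
qed

lemma scaleA:
  assumes g: "g \<in> AA"
  shows "(\<lambda>x. a * g x + c) \<in> AA"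
  unfolding memA
proof (intro conjI allI impI)
  show "continuous_on \<Omega> (\<lambda>x. a * g x + c)" using contA[OF g] by (intro continuous_intros)
  fix \<delta> :: real assume d: "\<delta> > 0"
  have d': "\<delta> / (\<bar>a\<bar> + 1) > 0" using d by simp
  obtain f where f: "f \<in> RNN \<rho> Ns" "\<forall>x\<in>\<Omega>. \<bar>f x - g x\<bar> \<le> \<delta> / (\<bar>a\<bar> + 1)"
    using g d' unfolding memA by blast
  have "(\<lambda>x. a * f x + c) \<in> RNN \<rho> Ns" by (rule RNN_mod[OF f(1) Ns0 Nspos])
  moreover have "\<forall>x\<in>\<Omega>. \<bar>(a * f x + c) - (a * g x + c)\<bar> \<le> \<delta>"
  proof
    fix x assume "x \<in> \<Omega>"
    then have fx: "\<bar>f x - g x\<bar> \<le> \<delta> / (\<bar>a\<bar> + 1)" using f by auto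
    have "\<bar>(a * f x + c) - (a * g x + c)\<bar> = \<bar>a\<bar> * \<bar>f x - g x\<bar>" by (simp add: abs_mult[symmetric] algebra_simps)
    also have "\<dots> \<le> (\<bar>a\<bar> + 1) * (\<delta> / (\<bar>a\<bar> + 1))" using fx by (intro mult_mono) auto
    also have "\<dots> = \<delta>" by simp
    finally show "\<bar>(a * f x + c) - (a * g x + c)\<bar> \<le> \<delta>" .
  qed
  ultimately show "\<exists>f\<in>RNN \<rho> Ns. \<forall>x\<in>\<Omega>. \<bar>f x - (a * g x + c)\<bar> \<le> \<delta>"
    by (intro bexI[of _ "\<lambda>x. a * f x + c"]) simp_all
qed

lemma RNN_ne: "\<exists>f. f \<in> RNN \<rho> Ns"
proof -
  have "length (replicate (length Ns) ((\<lambda>i j. 0), (\<lambda>i. 0)) :: layer list) = length Ns" by simp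
  then show ?thesis unfolding RNN_def by blast
qed

lemma constA: "(\<lambda>x. c) \<in> AA"
proof -
  obtain f0 :: "real^'d \<Rightarrow> real" where f0: "f0 \<in> RNN \<rho> Ns" using RNN_ne by blast
  have "(\<lambda>x. 0 * f0 x + c) \<in> RNN \<rho> Ns" by (rule RNN_mod[OF f0 Ns0 Nspos])
  then have "(\<lambda>x::real^'d. c) \<in> RNN \<rho> Ns" by simp
  then show ?thesis unfolding memA by (auto intro: continuous_intros intro!: bexI[of _ "\<lambda>x. c"])
qed

lemma ridgeA:
  assumes dx: "(\<rho> has_real_derivative D) (at x0)" and D0: "D \<noteq> 0"
  shows "(\<lambda>x. \<rho> (w \<bullet> x + b)) \<in> AA"
  unfolding memA
proof (intro conjI allI impI)
  show cc: "continuous_on \<Omega> (\<lambda>x. \<rho> (w \<bullet> x + b))"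
    by (rule continuous_on_compose2[OF cr]) (auto intro!: continuous_intros)
  fix \<delta> :: real assume d: "\<delta> > 0"
  have "bounded ((\<lambda>x. \<rho> (w \<bullet> x + b)) ` \<Omega>)"
    by (intro compact_imp_bounded compact_continuous_image cc cpt)
  then obtain R where R: "\<And>x. x \<in> \<Omega> \<Longrightarrow> \<bar>\<rho> (w \<bullet> x + b)\<bar> \<le> R" unfolding bounded_iff by auto
  obtain ps where ps: "length ps = Suc (length Ns - 1)"
    "\<forall>z. \<bar>\<rho> z\<bar> \<le> R \<longrightarrow> \<bar>chain \<rho> ps z - (1 * \<rho> z + 0)\<bar> < \<delta>"
    using chain_approx[OF cr dx D0, of "length Ns - 1"] d by blast
  have "length ps = length Ns" using ps(1) Ns0 by (cases Ns) auto
  then have "(\<lambda>x::real^'d. chain \<rho> ps (w \<bullet> x + b)) \<in> RNN \<rho> Ns" by (rule RNN_chain[OF Ns0 Nspos])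
  moreover have "\<forall>x\<in>\<Omega>. \<bar>chain \<rho> ps (w \<bullet> x + b) - \<rho> (w \<bullet> x + b)\<bar> \<le> \<delta>"
    using ps(2) R by (auto intro: less_imp_le)
  ultimately show "\<exists>f\<in>RNN \<rho> Ns. \<forall>x\<in>\<Omega>. \<bar>f x - \<rho> (w \<bullet> x + b)\<bar> \<le> \<delta>"
    by (intro bexI[of _ "\<lambda>x. chain \<rho> ps (w \<bullet> x + b)"]) simp_all
qed

lemma addA:
  assumes e: "\<epsilon> > 0" and ec: "eps_convex \<Omega> \<epsilon> AA" and f: "f \<in> AA" and g: "g \<in> AA"
  shows "(\<lambda>x. f x + g x) \<in> AA"
proof (rule closedA)
  show "continuous_on \<Omega> (\<lambda>x. f x + g x)" using contA[OF f] contA[OF g] by (intro continuous_intros)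
  fix \<delta> :: real assume d: "\<delta> > 0"
  define t where "t = 2 * \<epsilon> / \<delta>"
  have t0: "t > 0" using e d by (simp add: t_def)
  have tf: "(\<lambda>x. t * f x + 0) \<in> AA" by (rule scaleA[OF f])
  have tg: "(\<lambda>x. t * g x + 0) \<in> AA" by (rule scaleA[OF g])
  define F where "F i = (if i = (0::nat) then (\<lambda>x. t * f x + 0) else (\<lambda>x. t * g x + 0))" for i
  define hh where "hh x = t * (f x + g x) / 2" for x
  have "hh \<in> fun_convex_hull AA"
    unfolding fun_convex_hull_def
  proof (intro CollectI exI[of _ "2::nat"] exI[of _ "\<lambda>_. 1/2"] exI[of _ F] conjI allI impI)
    fix i :: nat assume "i < 2"
    show "0 \<le> (1::real) / 2" by simp
    show "F i \<in> AA" using tf tg by (simp add: F_def)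
  next
    show "(\<Sum>i<(2::nat). (1::real) / 2) = 1" by simp
    show "hh = (\<lambda>x. \<Sum>i<2. 1 / 2 * F i x)"
      by (auto simp: fun_eq_iff hh_def F_def numeral_2_eq_2 lessThan_Suc field_simps)
  qed
  then obtain g' where g': "g' \<in> AA" "sup_dist \<Omega> hh g' < \<epsilon>" using ec unfolding eps_convex_def by blast
  have chh: "continuous_on \<Omega> hh" unfolding hh_def[abs_def] using contA[OF f] contA[OF g]
    by (intro continuous_intros) auto
  have "(\<lambda>x. (2 / t) * g' x + 0) \<in> AA" by (rule scaleA[OF g'(1)])
  moreover have "\<forall>x\<in>\<Omega>. \<bar>(2 / t) * g' x + 0 - (f x + g x)\<bar> \<le> \<delta>"
  proof
    fix x assume x: "x \<in> \<Omega>"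
    have b: "\<bar>hh x - g' x\<bar> \<le> \<epsilon>" using sd_ge[OF cpt chh contA[OF g'(1)] x] g'(2) by simp
    have "(2 / t) * g' x + 0 - (f x + g x) = (2 / t) * (g' x - hh x)" using t0 by (simp add: hh_def field_simps)
    then have "\<bar>(2 / t) * g' x + 0 - (f x + g x)\<bar> = \<bar>2 / t\<bar> * \<bar>g' x - hh x\<bar>"
      by (simp only: abs_mult)
    also have "\<dots> = (2 / t) * \<bar>hh x - g' x\<bar>" using t0 by (simp add: abs_minus_commute)
    also have "\<dots> \<le> (2 / t) * \<epsilon>" using b t0 by (intro mult_left_mono) auto
    also have "\<dots> = \<delta>" using e d by (simp add: t_def)
    finally show "\<bar>(2 / t) * g' x + 0 - (f x + g x)\<bar> \<le> \<delta>" .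
  qed
  ultimately show "\<exists>f'\<in>AA. \<forall>x\<in>\<Omega>. \<bar>f' x - (f x + g x)\<bar> \<le> \<delta>"
    by (intro bexI[of _ "\<lambda>x. (2 / t) * g' x + 0"]) simp_all
qed

definition UU :: "(real \<Rightarrow> real) set" where
  "UU = {\<phi>. continuous_on UNIV \<phi> \<and> (\<forall>w b. (\<lambda>x. \<phi> (w \<bullet> x + b)) \<in> AA)}"

lemma ucls_UU:
  assumes add: "\<And>f g. f \<in> AA \<Longrightarrow> g \<in> AA \<Longrightarrow> (\<lambda>x. f x + g x) \<in> AA"
  shows "ucls UU"
proof
  fix \<phi> assume "\<phi> \<in> UU" then show "continuous_on UNIV \<phi>" by (simp add: UU_def)
next
  fix \<phi> \<psi> :: "real \<Rightarrow> real" and a :: real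
  assume p: "\<phi> \<in> UU" "\<psi> \<in> UU"
  show "(\<lambda>t. a * \<phi> t + \<psi> t) \<in> UU" unfolding UU_def
  proof (intro CollectI conjI allI)
    show "continuous_on UNIV (\<lambda>t. a * \<phi> t + \<psi> t)" using p by (auto simp: UU_def intro!: continuous_intros)
    fix w :: "real^'d" and b :: real
    have "(\<lambda>x. a * \<phi> (w \<bullet> x + b) + 0) \<in> AA" using p by (intro scaleA) (auto simp: UU_def)
    moreover have "(\<lambda>x. \<psi> (w \<bullet> x + b)) \<in> AA" using p by (auto simp: UU_def)
    ultimately have "(\<lambda>x. (a * \<phi> (w \<bullet> x + b) + 0) + \<psi> (w \<bullet> x + b)) \<in> AA" by (rule add)
    then show "(\<lambda>x. a * \<phi> (w \<bullet> x + b) + \<psi> (w \<bullet> x + b)) \<in> AA" by simp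
  qed
next
  fix c :: real
  show "(\<lambda>t. c) \<in> UU" unfolding UU_def using constA by auto
next
  fix \<phi> :: "real \<Rightarrow> real" and s c :: real assume p: "\<phi> \<in> UU"
  show "(\<lambda>t. \<phi> (s * t + c)) \<in> UU" unfolding UU_def
  proof (intro CollectI conjI allI)
    have "continuous_on UNIV \<phi>" using p by (simp add: UU_def)
    then show "continuous_on UNIV (\<lambda>t. \<phi> (s * t + c))"
      by (rule continuous_on_compose2) (auto intro!: continuous_intros)
    fix w :: "real^'d" and b :: real
    have "\<forall>w b. (\<lambda>x. \<phi> (w \<bullet> x + b)) \<in> AA" using p by (simp add: UU_def)
    then have "(\<lambda>x. \<phi> ((s *\<^sub>R w) \<bullet> x + (s * b + c))) \<in> AA" by blast
    moreover have "(\<lambda>x. \<phi> ((s *\<^sub>R w) \<bullet> x + (s * b + c))) = (\<lambda>x. \<phi> (s * (w \<bullet> x + b) + c))"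
      by (auto simp: fun_eq_iff algebra_simps)
    ultimately show "(\<lambda>x. \<phi> (s * (w \<bullet> x + b) + c)) \<in> AA" by simp
  qed
next
  fix \<phi> :: "real \<Rightarrow> real"
  assume c: "continuous_on UNIV \<phi>"
    and ap: "\<And>R e. e > 0 \<Longrightarrow> \<exists>\<psi>\<in>UU. \<forall>t. \<bar>t\<bar> \<le> R \<longrightarrow> \<bar>\<phi> t - \<psi> t\<bar> \<le> e"
  show "\<phi> \<in> UU" unfolding UU_def
  proof (intro CollectI conjI allI c)
    fix w :: "real^'d" and b :: real
    obtain B where B: "\<And>x. x \<in> \<Omega> \<Longrightarrow> norm x \<le> B"
      using compact_imp_bounded[OF cpt] unfolding bounded_iff by auto
    define R where "R = norm w * B + \<bar>b\<bar>"
    have xR: "\<bar>w \<bullet> x + b\<bar> \<le> R" if "x \<in> \<Omega>" for x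
    proof -
      have "\<bar>w \<bullet> x\<bar> \<le> norm w * norm x" by (rule Cauchy_Schwarz_ineq2)
      also have "\<dots> \<le> norm w * B" using B[OF that] by (intro mult_left_mono) auto
      finally show ?thesis unfolding R_def by linarith
    qed
    show "(\<lambda>x. \<phi> (w \<bullet> x + b)) \<in> AA"
    proof (rule closedA)
      show "continuous_on \<Omega> (\<lambda>x. \<phi> (w \<bullet> x + b))"
        by (rule continuous_on_compose2[OF c]) (auto intro!: continuous_intros)
      fix \<delta> :: real assume d: "\<delta> > 0"
      obtain \<psi> where \<psi>: "\<psi> \<in> UU" "\<forall>t. \<bar>t\<bar> \<le> R \<longrightarrow> \<bar>\<phi> t - \<psi> t\<bar> \<le> \<delta>" using ap[OF d] by blast
      have "(\<lambda>x. \<psi> (w \<bullet> x + b)) \<in> AA" using \<psi>(1) by (simp add: UU_def)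
      moreover have "\<forall>x\<in>\<Omega>. \<bar>\<psi> (w \<bullet> x + b) - \<phi> (w \<bullet> x + b)\<bar> \<le> \<delta>"
        using \<psi>(2) xR by (auto simp: abs_minus_commute)
      ultimately show "\<exists>f\<in>AA. \<forall>x\<in>\<Omega>. \<bar>f x - \<phi> (w \<bullet> x + b)\<bar> \<le> \<delta>"
        by (intro bexI[of _ "\<lambda>x. \<psi> (w \<bullet> x + b)"]) simp_all
    qed
  qed
qed

lemma dense_from_add:
  assumes add: "\<And>f g. f \<in> AA \<Longrightarrow> g \<in> AA \<Longrightarrow> (\<lambda>x. f x + g x) \<in> AA"
    and dx: "(\<rho> has_real_derivative D) (at x0)" and D0: "D \<noteq> 0"
    and np: "\<not> (\<exists>p. \<forall>x. \<rho> x = poly p x)"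
  shows "dense_in_C \<Omega> (RNN \<rho> Ns)"
proof -
  interpret u: ucls UU by (rule ucls_UU[OF add])
  have rU: "\<rho> \<in> UU" unfolding UU_def using cr ridgeA[OF dx D0] by auto
  have eU: "exp \<in> UU" by (rule u.expU) (rule u.monoU[OF rU np])
  have ERA: "f \<in> AA" if "f \<in> ER" for f
    using that
  proof induction
    case (ER_base c w)
    have "\<forall>w b. (\<lambda>x. exp (w \<bullet> x + b)) \<in> AA" using eU by (simp add: UU_def)
    then have "(\<lambda>x. exp (w \<bullet> x + 0)) \<in> AA" by blast
    from scaleA[OF this, of c 0] show ?case by simp
  next
    case (ER_add f g) show ?case by (rule add[OF ER_add.IH])
  qed
  interpret fr: function_ring_on "ER :: (real^'d \<Rightarrow> real) set" \<Omega>
    apply unfold_locales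
    apply (rule cpt)
    apply (erule ER_cont)
    apply (erule (1) ER.ER_add)
    apply (erule (1) ER_mult)
    apply (rule ER_const)
    apply (rule ER_sep, assumption)
    done
  show ?thesis unfolding dense_in_C_def
  proof (intro allI impI)
    fix g :: "real^'d \<Rightarrow> real" assume cg: "continuous_on \<Omega> g"
    show "g \<in> AA"
    proof (rule closedA[OF cg])
      fix \<delta> :: real assume d: "\<delta> > 0"
      obtain f where f: "f \<in> ER" "\<forall>x\<in>\<Omega>. \<bar>g x - f x\<bar> < \<delta>" using fr.Stone_Weierstrass_basic[OF cg d] by blast
      have "\<forall>x\<in>\<Omega>. \<bar>f x - g x\<bar> \<le> \<delta>" using f(2) by (auto simp: abs_minus_commute intro: less_imp_le)
      then show "\<exists>f\<in>AA. \<forall>x\<in>\<Omega>. \<bar>f x - g x\<bar> \<le> \<delta>" using ERA[OF f(1)] by blast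
    qed
  qed
qed

end

theorem theorem2p2:
  fixes \<rho> :: "real \<Rightarrow> real" and Ns :: "nat list" and \<Omega> :: "(real^'d) set"
  assumes "Ns \<noteq> []"
    and "\<forall>n\<in>set Ns. 0 < n"
    and "compact \<Omega>"
    and "continuous_on UNIV \<rho>"
    and "\<not> (\<exists>p :: real poly. \<forall>x. \<rho> x = poly p x)"
    and "\<exists>x0 D. (\<rho> has_real_derivative D) (at x0) \<and> D \<noteq> 0"
    and "\<not> dense_in_C \<Omega> (RNN \<rho> Ns)"
  shows "\<not> (\<exists>\<epsilon>>0. eps_convex \<Omega> \<epsilon> (C_closure \<Omega> (RNN \<rho> Ns)))"
proof
  assume "\<exists>\<epsilon>>0. eps_convex \<Omega> \<epsilon> (C_closure \<Omega> (RNN \<rho> Ns))"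
  then obtain \<epsilon> where e: "\<epsilon> > 0" "eps_convex \<Omega> \<epsilon> (C_closure \<Omega> (RNN \<rho> Ns))" by blast
  obtain x0 D where dx: "(\<rho> has_real_derivative D) (at x0)" "D \<noteq> 0" using assms(6) by blast
  show False
  proof (cases "\<Omega> = {}")
    case True
    have "length (replicate (length Ns) ((\<lambda>i j. 0), (\<lambda>i. 0)) :: layer list) = length Ns" by simp
    then obtain f0 :: "real^'d \<Rightarrow> real" where f0: "f0 \<in> RNN \<rho> Ns" unfolding RNN_def by blast
    have "dense_in_C \<Omega> (RNN \<rho> Ns)" unfolding dense_in_C_def C_closure_def sup_dist_def
      using True f0 by auto
    then show False using assms(7) by simp
  next
    case False
    interpret nc: netctx \<rho> Ns \<Omega> by unfold_locales (use assms False in auto)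
    have "dense_in_C \<Omega> (RNN \<rho> Ns)"
      by (rule nc.dense_from_add[OF nc.addA[OF e] dx assms(5)])
    then show False using assms(7) by simp
  qed
qed

end
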